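(* Let $\ell\ge1$ and $n\ge\ell+1$ be integers, let $\mu>\ell-\frac32$ be real, $C_0\in\mathbb R$, and let $F_0(r)=C_0\,r^{\mu-\frac12}e^{-r/2}L^{(2\mu)}_{n-\ell-1}(r)$ for $r>0$, extended to $r<0$ by $F_0(-r)=(-1)^\ell F_0(r)$. Let $F(r,t)$ be the solution of $$F_{tt}-F_{rr}-\frac2rF_r+\frac{\ell(\ell+1)}{r^2}F=0,\qquad F(r,0)=F_0(r),\ F_t(r,0)=0,$$ given by $$F(r,t)=\frac1{2r}\big[(r-t)F_0(r-t)+(r+t)F_0(r+t)\big]-\frac{\ell(\ell+1)\,t}{4r^2}\int_{r-t}^{r+t}F_0(s)\,{}_2F_1\!\Big(1-\ell,\ell+2;2;\frac{t^2-(r-s)^2}{4rs}\Big)ds.$$ Then for every $r>0$ there exist constants $C(r)>0$ and $T(r)>0$ such that for all $t\ge T(r)$, $$\Big|F(r,t)-\frac1{2r}\big[(r-t)F_0(r-t)+(r+t)F_0(r+t)\big]\Big|\le C(r)\,e^{-t/2}\,t^{\,n+\mu-\frac32}.$$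
   Context: $L^{(\alpha)}_k$ denotes the generalized Laguerre polynomial of degree $k$; ${}_2F_1$ is the Gauss hypergeometric function (a polynomial of degree $\ell-1$ in its last argument here). This $F_0$ is the radial wave function of a pionic atom. *)

theory Defs
  imports "HOL-Analysis.Analysis"
begin

definition laguerre :: "nat \<Rightarrow> real \<Rightarrow> real \<Rightarrow> real" where
  "laguerre k \<alpha> x = (\<Sum>i\<le>k. (-1)^i * ((real k + \<alpha>) gchoose (k - i)) * x^i / fact i)"

definition hyp2f1_term :: "nat \<Rightarrow> real \<Rightarrow> real \<Rightarrow> real \<Rightarrow> real" where
  "hyp2f1_term m b c z =
     (\<Sum>j\<le>m. pochhammer (- real m) j * pochhammer b j / (pochhammer c j * fact j) * z^j)"

definition F0 :: "nat \<Rightarrow> nat \<Rightarrow> real \<Rightarrow> real \<Rightarrow> real \<Rightarrow> real" where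
  "F0 l n \<mu> C0 r =
     (if r > 0 then C0 * r powr (\<mu> - 1/2) * exp (- r / 2) * laguerre (n - l - 1) (2 * \<mu>) r
      else if r < 0 then (-1)^l * (C0 * (-r) powr (\<mu> - 1/2) * exp (r / 2) * laguerre (n - l - 1) (2 * \<mu>) (-r))
      else 0)"

definition Ffree :: "nat \<Rightarrow> nat \<Rightarrow> real \<Rightarrow> real \<Rightarrow> real \<Rightarrow> real \<Rightarrow> real" where
  "Ffree l n \<mu> C0 r t =
     1 / (2 * r) * ((r - t) * F0 l n \<mu> C0 (r - t) + (r + t) * F0 l n \<mu> C0 (r + t))"

definition Fsol :: "nat \<Rightarrow> nat \<Rightarrow> real \<Rightarrow> real \<Rightarrow> real \<Rightarrow> real \<Rightarrow> real" where
  "Fsol l n \<mu> C0 r t =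
     Ffree l n \<mu> C0 r t
     - real (l * (l + 1)) * t / (4 * r^2) *
       (LINT s:{r - t..r + t}|lborel.
          F0 l n \<mu> C0 s * hyp2f1_term (l - 1) (real l + 2) 2 ((t^2 - (r - s)^2) / (4 * r * s)))"

end

theory Submission
  imports Defs "HOL-Computational_Algebra.Polynomial"
begin


definition qc :: "nat \<Rightarrow> nat \<Rightarrow> real" where
 "qc m j = pochhammer (- real m) j * pochhammer (real m + 3) j / (pochhammer 2 j * fact j)"

definition Qp :: "nat \<Rightarrow> real poly" where
 "Qp m = (\<Sum>j\<le>m. monom (qc m j) j)"

lemma qc_zero: "j > m \<Longrightarrow> qc m j = 0"
  unfolding qc_def by (auto simp: pochhammer_eq_0_iff)

lemma qc_m_nz: "qc m m \<noteq> 0"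
proof -
  have "pochhammer (- real m) m \<noteq> 0" by (auto simp: pochhammer_eq_0_iff)
  moreover have "pochhammer (real m + 3) m \<noteq> 0"
    by (metis add_nonneg_pos of_nat_0_le_iff pochhammer_pos zero_less_numeral less_irrefl)
  moreover have "pochhammer (2::real) m \<noteq> 0"
    by (metis pochhammer_pos zero_less_numeral less_irrefl)
  ultimately show ?thesis unfolding qc_def by simp
qed

lemma coeff_Qp: "coeff (Qp m) j = qc m j"
  unfolding Qp_def by (auto simp: coeff_sum coeff_monom qc_zero not_le)

lemma poly_Qp: "poly (Qp m) z = hyp2f1_term m (real m + 3) 2 z"
  unfolding Qp_def hyp2f1_term_def qc_def by (simp add: poly_sum poly_monom)

lemma qc_rec: "real (j+1) * real (j+2) * qc m (Suc j) = (real j - real m) * (real j + real m + 3) * qc m j"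
proof -
  have p2: "pochhammer (2::real) j > 0" by (simp add: pochhammer_pos)
  have f: "fact j > (0::real)" by simp
  have "qc m (Suc j) = (pochhammer (- real m) j * pochhammer (real m + 3) j / (pochhammer 2 j * fact j))
      * ((real j - real m) * (real j + real m + 3) / (real (j+1) * real (j+2)))"
  proof -
    have g: "A * (- real m + real j) * (B * (real m + 3 + real j)) / (P * (2 + real j) * (real (Suc j) * F))
        = A * B / (P * F) * ((real j - real m) * (real j + real m + 3) / (real (j+1) * real (j+2)))"
      if "P \<noteq> 0" "F \<noteq> 0" for A B P F :: real
      using that by (simp add: divide_simps)
    show ?thesis unfolding qc_def pochhammer_Suc fact_Suc using g p2 f by simp
  qed
  hence "qc m (Suc j) = qc m j * ((real j - real m) * (real j + real m + 3) / (real (j+1) * real (j+2)))"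
    unfolding qc_def[symmetric] .
  moreover have "real (j+1) * real (j+2) \<noteq> 0" by simp
  ultimately show ?thesis by simp
qed

definition Lop :: "nat \<Rightarrow> real poly \<Rightarrow> real poly" where
 "Lop m p = [:0,1,-1:] * pderiv (pderiv p) + [:2, -4:] * pderiv p + smult (real m * (real m + 3)) p"

lemma coeff_Lop: "coeff (Lop m p) j = real (j+1) * real (j+2) * coeff p (Suc j) - (real j - real m) * (real j + real m + 3) * coeff p j"
proof -
  have e: "[:0,1,-1:] * q = pCons 0 q - pCons 0 (pCons 0 q)" for q :: "real poly"
    by (simp add: mult_pCons_left)
  have e2: "[:2,-4:] * q = smult 2 q - smult 4 (pCons 0 q)" for q :: "real poly"
    by (simp add: mult_pCons_left)
  show ?thesis
    unfolding Lop_def e e2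
    by (cases j; cases "j - 1"; auto simp: coeff_pderiv coeff_pCons algebra_simps split: nat.splits)
qed

lemma poly_Lop: "poly (Lop m p) x = x * (1 - x) * poly (pderiv (pderiv p)) x + (2 - 4 * x) * poly (pderiv p) x + real m * (real m + 3) * poly p x"
  unfolding Lop_def by (simp add: algebra_simps)

lemma Lop_Qp: "Lop m (Qp m) = 0"
  by (rule poly_eqI) (simp add: coeff_Lop coeff_Qp qc_rec[simplified])

lemma Qp_sym: "poly (Qp m) (1 - x) = (-1)^m * poly (Qp m) x"
proof -
  define Q where "Q = Qp m"
  define R where "R = Q \<circ>\<^sub>p [:1,-1:]"
  have dR: "pderiv R = smult (-1) (pderiv Q \<circ>\<^sub>p [:1,-1:])"
    unfolding R_def by (simp add: pderiv_pcompose pderiv_pCons)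
  have ddR: "pderiv (pderiv R) = pderiv (pderiv Q) \<circ>\<^sub>p [:1,-1:]"
    unfolding dR pderiv_smult by (simp add: pderiv_pcompose pderiv_pCons)
  have "poly (Lop m R) x = poly (Lop m Q) (1 - x)" for x
  proof -
    have pR: "poly R x = poly Q (1 - x)" unfolding R_def by (simp add: poly_pcompose)
    show ?thesis unfolding poly_Lop ddR unfolding dR pR by (simp add: poly_pcompose algebra_simps)
  qed
  hence LR: "Lop m R = 0" using Lop_Qp[of m] unfolding Q_def[symmetric]
    by (metis poly_0 poly_eq_poly_eq_iff ext)
  have degQ: "degree Q = m"
    unfolding Q_def by (rule le_antisym; auto intro!: degree_le le_degree simp: coeff_Qp qc_zero qc_m_nz)
  have degR: "degree R = m" unfolding R_def by (simp add: degree_pcompose degQ)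
  have lR: "coeff R m = (-1)^m * coeff Q m"
    using lead_coeff_comp[of "[:1,-1:]" Q] degQ degR unfolding R_def by simp
  define d where "d j = (-1)^m * coeff R j - coeff Q j" for j
  have dhi: "d j = 0" if "j \<ge> m" for j
  proof (cases "j = m")
    case True thus ?thesis using lR by (simp add: d_def)
  next
    case False
    hence "j > degree R" "j > degree Q" using that degQ degR by auto
    thus ?thesis by (simp add: d_def coeff_eq_0)
  qed
  have drec: "real (j+1) * real (j+2) * d (Suc j) - (real j - real m) * (real j + real m + 3) * d j = 0" for j
  proof -
    have "coeff (Lop m R) j = 0" "coeff (Lop m Q) j = 0" using LR Lop_Qp[of m] Q_def by auto
    moreover have "real (j+1) * real (j+2) * d (Suc j) - (real j - real m) * (real j + real m + 3) * d j
       = (-1)^m * coeff (Lop m R) j - coeff (Lop m Q) j"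
      unfolding coeff_Lop d_def by (simp add: algebra_simps)
    ultimately show ?thesis by simp
  qed
  have dz: "k \<le> m \<Longrightarrow> d (m - k) = 0" for k
  proof (induction k)
    case 0 thus ?case using dhi by simp
  next
    case (Suc k)
    define j where "j = m - Suc k"
    have jl: "j < m" and sj: "Suc j = m - k" using Suc.prems by (auto simp: j_def)
    have "d (Suc j) = 0" using Suc sj by simp
    with drec[of j] have "(real j - real m) * (real j + real m + 3) * d j = 0" by simp
    moreover have "real j - real m \<noteq> 0" "real j + real m + 3 \<noteq> 0" using jl by auto
    ultimately show ?case by (simp add: j_def)
  qed
  have "d j = 0" for j
    by (cases "j \<le> m") (use dz[of "m - j"] dhi in auto)
  hence "smult ((-1)^m) R = Q" by (intro poly_eqI) (simp add: d_def)
  hence "(-1)^m * poly R x = poly Q x" by (metis poly_smult)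
  hence h: "(-1)^m * poly Q (1 - x) = poly Q x"
    unfolding R_def poly_pcompose by simp
  have s1: "((-1::real)^m) * ((-1)^m) = 1" by (simp add: power_mult_distrib[symmetric])
  have "poly Q (1 - x) = ((-1::real)^m) * ((-1)^m) * poly Q (1 - x)" using s1 by simp
  also have "\<dots> = (-1)^m * poly Q x" using h by (simp only: mult.assoc)
  finally have "poly Q (1 - x) = (-1)^m * poly Q x" .
  thus ?thesis by (simp add: Q_def)
qed



lemma odd_int_zero:
  fixes g :: "real \<Rightarrow> real"
  assumes odd: "\<And>s. g (- s) = - g s"
  shows "(LINT s:{-a..a}|lborel. g s) = 0"
proof -
  have "(LINT s:{-a..a}|lborel. g s) = integral\<^sup>L lborel (\<lambda>x. indicator {-a..a} x *\<^sub>R g x)"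
    by (simp add: set_lebesgue_integral_def)
  also have "\<dots> = \<bar>-1\<bar> *\<^sub>R (LBINT x. indicator {-a..a} (0 + -1 * x) *\<^sub>R g (0 + -1 * x))"
    by (rule lborel_integral_real_affine) simp
  also have "\<dots> = (LBINT x. - (indicator {-a..a} x *\<^sub>R g x))"
  proof -
    have "\<And>x. indicator {-a..a} (0 + -1*x) *\<^sub>R g (0 + -1*x) = - (indicator {-a..a} x *\<^sub>R g x)"
      by (auto simp: odd indicator_def)
    thus ?thesis by simp
  qed
  also have "\<dots> = - integral\<^sup>L lborel (\<lambda>x. indicator {-a..a} x *\<^sub>R g x)"
    by (rule Bochner_Integration.integral_minus)
  finally show ?thesis by (simp add: set_lebesgue_integral_def)
qed

lemma set_int_bound:
  fixes f :: "real \<Rightarrow> real"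
  assumes b: "\<And>x. x \<in> {a<..b} \<Longrightarrow> \<bar>f x\<bar> \<le> B" and ab: "a \<le> b"
  shows "\<bar>LINT x:{a<..b}|lborel. f x\<bar> \<le> B * (b - a)"
proof (cases "set_integrable lborel {a<..b} f")
  case True
  have ci: "set_integrable lborel {a<..b} (\<lambda>x. B)"
  proof (rule set_integrable_subset[of _ "{a..b}"])
    show "set_integrable lborel {a..b} (\<lambda>x. B)"
      unfolding set_integrable_def by (rule borel_integrable_compact) auto
  qed auto
  have "\<bar>LINT x:{a<..b}|lborel. f x\<bar> \<le> (LINT x:{a<..b}|lborel. norm (f x))"
    using set_integral_norm_bound[OF True] by simp
  also have "\<dots> \<le> (LINT x:{a<..b}|lborel. B)"
    by (rule set_integral_mono[OF set_integrable_norm[OF True] ci]) (use b in simp)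
  also have "\<dots> = B * (b - a)"
    using ab by (subst set_integral_const) auto
  finally show ?thesis .
next
  case False
  hence z: "(LINT x:{a<..b}|lborel. f x) = 0"
    by (simp add: set_lebesgue_integral_def set_integrable_def not_integrable_integral_eq)
  show ?thesis
  proof (cases "a < b")
    case True
    hence "(a+b)/2 \<in> {a<..b}" by auto
    from b[OF this] have "B \<ge> 0" by linarith
    thus ?thesis using z ab by simp
  next
    case False thus ?thesis using z ab by simp
  qed
qed

lemma poly_sum_bound:
  fixes c :: "nat \<Rightarrow> real"
  assumes "\<bar>x\<bar> \<le> X" "1 \<le> X"
  shows "\<bar>\<Sum>i\<le>k. c i * x^i\<bar> \<le> (\<Sum>i\<le>k. \<bar>c i\<bar>) * X^k"
proof -
  have "\<bar>\<Sum>i\<le>k. c i * x^i\<bar> \<le> (\<Sum>i\<le>k. \<bar>c i * x^i\<bar>)" by (rule sum_abs)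
  also have "\<dots> \<le> (\<Sum>i\<le>k. \<bar>c i\<bar> * X^k)"
  proof (rule sum_mono)
    fix i assume "i \<in> {..k}"
    hence "\<bar>x\<bar>^i \<le> X^i" "X^i \<le> X^k" using assms
      by (auto intro!: power_mono power_increasing)
    thus "\<bar>c i * x^i\<bar> \<le> \<bar>c i\<bar> * X^k"
      by (simp add: abs_mult power_abs mult_left_mono)
  qed
  also have "\<dots> = (\<Sum>i\<le>k. \<bar>c i\<bar>) * X^k" by (simp add: sum_distrib_right)
  finally show ?thesis .
qed

lemma laguerre_bound:
  assumes "\<bar>x\<bar> \<le> X" "1 \<le> X"
  shows "\<bar>laguerre k \<alpha> x\<bar> \<le> (\<Sum>i\<le>k. \<bar>(-1)^i * ((real k + \<alpha>) gchoose (k - i)) / fact i\<bar>) * X^k"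
proof -
  have "laguerre k \<alpha> x = (\<Sum>i\<le>k. ((-1)^i * ((real k + \<alpha>) gchoose (k - i)) / fact i) * x^i)"
    unfolding laguerre_def by (intro sum.cong refl) simp
  thus ?thesis by (simp only:) (rule poly_sum_bound[OF assms])
qed

lemma hyp_bound:
  assumes "\<bar>x\<bar> \<le> X" "1 \<le> X"
  shows "\<bar>hyp2f1_term m b c x\<bar> \<le> (\<Sum>j\<le>m. \<bar>pochhammer (- real m) j * pochhammer b j / (pochhammer c j * fact j)\<bar>) * X^m"
  unfolding hyp2f1_term_def by (rule poly_sum_bound[OF assms])

lemma F0_neg: "F0 l n \<mu> C0 (- s) = (-1)^l * F0 l n \<mu> C0 s"
proof -
  have sq: "((-1::real)^l) * ((-1)^l) = 1" by (simp add: power_mult_distrib[symmetric])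
  show ?thesis
  proof (cases "s > 0")
    case True thus ?thesis by (simp add: F0_def)
  next
    case False
    show ?thesis
    proof (cases "s < 0")
      case True
      thus ?thesis unfolding F0_def using sq by (simp add: mult.assoc[symmetric])
    next
      case False
      with \<open>\<not> s > 0\<close> have "s = 0" by simp
      thus ?thesis by (simp add: F0_def)
    qed
  qed
qed

lemma t85: "\<not> 0 \<le> (e::real) \<Longrightarrow> 2 powr (-e) * t powr e \<le> 2 powr \<bar>e\<bar> * t powr e"
  by (intro mult_right_mono powr_mono) auto
lemma prod5:
  fixes a b c d f B C D F :: real
  assumes "0 \<le> a" "0 \<le> b" "b \<le> B" "0 \<le> c" "c \<le> C" "0 \<le> d" "d \<le> D" "0 \<le> f" "f \<le> F"
  shows "a * b * c * d * f \<le> a * B * C * D * F"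
proof -
  have "a * b \<le> a * B" using assms by (intro mult_left_mono) auto
  moreover have "0 \<le> a * b" using assms by simp
  ultimately have "a * b * c \<le> a * B * C" using assms by (intro mult_mono) auto
  moreover have "0 \<le> a * b * c" using assms by simp
  ultimately have "a * b * c * d \<le> a * B * C * D" using assms by (intro mult_mono) auto
  moreover have "0 \<le> a * b * c * d" using assms by simp
  ultimately show ?thesis using assms by (intro mult_mono) auto
qed
lemma t114: "(t::real) > 0 \<Longrightarrow> t powr e * t^k * t^j = t powr (e + real k + real j)"
  by (simp add: powr_add powr_realpow)
lemma t100: assumes "r > (0::real)" "s \<ge> t/2" "t > 0" shows "t^2 / (4 * r * s) \<le> t^2 / (4 * r * (t / 2))"
proof (rule divide_left_mono)
  show "4 * r * (t / 2) \<le> 4 * r * s" using assms by simp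
  show "0 \<le> t^2" by simp
  show "0 < 4 * r * s * (4 * r * (t / 2))" using assms by (simp add: mult_pos_pos)
qed
lemma t84: assumes "(t::real) > 0" shows "(t / 2) powr e = 2 powr (- e) * t powr e"
proof -
  have "(t / 2) powr e = t powr e / 2 powr e" using assms by (simp add: powr_divide)
  also have "\<dots> = 2 powr (- e) * t powr e" by (simp add: powr_minus_divide)
  finally show ?thesis .
qed


theorem lemma2p1:
  fixes l n :: nat and \<mu> C0 r :: real
  assumes "l \<ge> 1" and "n \<ge> l + 1" and "\<mu> > real l - 3/2" and "r > 0"
  shows "\<exists>C T. C > 0 \<and> T > 0 \<and> (\<forall>t \<ge> T.
           \<bar>Fsol l n \<mu> C0 r t - Ffree l n \<mu> C0 r t\<bar>
             \<le> C * exp (- t / 2) * t powr (real n + \<mu> - 3/2))"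
proof -
  obtain m where lm: "l = Suc m" using assms(1) by (cases l) auto
  define H where "H z = hyp2f1_term (l - 1) (real l + 2) 2 z" for z
  have Hpoly: "H z = poly (Qp m) z" for z unfolding H_def poly_Qp lm by (simp add: add.commute)
  have Hsym: "H (1 - z) = (-1)^m * H z" for z using Qp_sym by (simp add: Hpoly)
  define g where "g t s = F0 l n \<mu> C0 s * H ((t^2 - (r - s)^2) / (4 * r * s))" for t s
  have diff: "Fsol l n \<mu> C0 r t - Ffree l n \<mu> C0 r t
      = - (real (l*(l+1)) * t / (4 * r^2)) * (LINT s:{r-t..r+t}|lborel. g t s)" for t
    unfolding Fsol_def g_def H_def by simp
  have godd: "g t (-s) = - g t s" for t s
  proof (cases "s = 0")
    case True thus ?thesis by (simp add: g_def F0_def)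
  next
    case False
    have z: "(t^2 - (r - (-s))^2) / (4*r*(-s)) = 1 - (t^2 - (r - s)^2) / (4 * r * s)"
      using False assms(4) by (simp add: field_simps) (simp add: power2_eq_square algebra_simps)
    have sq: "((-1::real)^m) * ((-1)^m) = 1" by (simp add: power_mult_distrib[symmetric])
    show ?thesis unfolding g_def z Hsym F0_neg lm using sq
      by (simp add: algebra_simps)
  qed
  have red: "\<bar>LINT s:{r-t..r+t}|lborel. g t s\<bar> \<le> \<bar>LINT s:{t-r<..r+t}|lborel. g t s\<bar>" if tr: "t > r" for t
  proof (cases "set_integrable lborel {r-t..r+t} (g t)")
    case True
    have U: "{r-t..r+t} = {-(t-r)..(t-r)} \<union> {t-r<..r+t}" using tr assms(4) by auto
    have i1: "set_integrable lborel {-(t-r)..t-r} (g t)"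
      by (rule set_integrable_subset[OF True]) (use tr assms(4) in auto)
    have i2: "set_integrable lborel {t-r<..r+t} (g t)"
      by (rule set_integrable_subset[OF True]) (use tr assms(4) in auto)
    have "(LINT s:{r-t..r+t}|lborel. g t s) = (LINT s:{-(t-r)..t-r}|lborel. g t s) + (LINT s:{t-r<..r+t}|lborel. g t s)"
      unfolding U by (rule set_integral_Un[OF _ i1 i2]) auto
    also have "(LINT s:{-(t-r)..t-r}|lborel. g t s) = 0" by (rule odd_int_zero) (rule godd)
    finally show ?thesis by simp
  next
    case False
    hence "(LINT s:{r-t..r+t}|lborel. g t s) = 0"
      by (simp add: set_lebesgue_integral_def set_integrable_def not_integrable_integral_eq)
    thus ?thesis by simp
  qed
  define k where "k = n - l - 1"
  define e where "e = \<mu> - 1/2"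
  define AL where "AL = (\<Sum>i\<le>k. \<bar>(-1)^i * ((real k + 2*\<mu>) gchoose (k - i)) / fact i\<bar>)"
  define AH where "AH = (\<Sum>j\<le>l-1. \<bar>pochhammer (- real (l-1)) j * pochhammer (real l + 2) j / (pochhammer 2 j * fact j)\<bar>)"
  define cH where "cH = 1 + 1 / (2 * r)"
  define K where "K = \<bar>C0\<bar> * 2 powr \<bar>e\<bar> * exp (r/2) * AL * 2^k * AH * cH^(l-1)"
  define T where "T = max 2 (2 * r)"
  have AL0: "AL \<ge> 0" unfolding AL_def by (intro sum_nonneg) auto
  have AH0: "AH \<ge> 0" unfolding AH_def by (intro sum_nonneg) auto
  have cH1: "cH \<ge> 1" unfolding cH_def using assms(4) by simp
  have K0: "K \<ge> 0" unfolding K_def using AL0 AH0 cH1 by simp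
  have expo: "e + real k + real (l - 1) = real n + \<mu> - 5/2"
    unfolding e_def k_def using assms(1,2) by (simp add: of_nat_diff)
  have pb: "\<bar>g t s\<bar> \<le> K * t powr (real n + \<mu> - 5/2) * exp (- t / 2)"
    if tT: "t \<ge> T" and sI: "s \<in> {t-r<..r+t}" for t s
  proof -
    have t2: "t \<ge> 2" and tr: "t \<ge> 2 * r" using tT by (auto simp: T_def)
    have s1: "s > t - r" "s \<le> t + r" using sI by auto
    have sl: "s \<ge> t / 2" using s1 tr by linarith
    have su: "s \<le> 2 * t" using s1 tr assms(4) by linarith
    have spos: "s > 0" "s \<ge> 1" using sl t2 by linarith+
    have tpos: "t > 0" using t2 by simp
    have F0s: "F0 l n \<mu> C0 s = C0 * s powr e * exp (- s / 2) * laguerre k (2 * \<mu>) s"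
      using spos unfolding F0_def e_def k_def by simp
    have L: "\<bar>laguerre k (2 * \<mu>) s\<bar> \<le> AL * (2 * t)^k"
      unfolding AL_def using laguerre_bound[of s "2*t" k "2*\<mu>"] spos su t2 by simp
    have P: "s powr e \<le> 2 powr \<bar>e\<bar> * t powr e"
    proof (cases "e \<ge> 0")
      case True
      have "s powr e \<le> (2 * t) powr e" by (rule powr_mono2) (use True spos su in auto)
      also have "\<dots> = 2 powr e * t powr e" using tpos by (simp add: powr_mult)
      also have "\<dots> \<le> 2 powr \<bar>e\<bar> * t powr e" using True by simp
      finally show ?thesis .
    next
      case False
      have "s powr e \<le> (t / 2) powr e" using False sl tpos by (intro powr_mono2') auto
      also have "\<dots> = 2 powr (- e) * t powr e"
        using tpos by (rule t84)
      also have "\<dots> \<le> 2 powr \<bar>e\<bar> * t powr e" using False by (rule t85)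
      finally show ?thesis .
    qed
    have E: "exp (- s / 2) \<le> exp (r / 2) * exp (- t / 2)"
      unfolding exp_add[symmetric] using s1 by simp
    define z where "z = (t^2 - (r - s)^2) / (4 * r * s)"
    have rs: "(r - s)^2 \<le> t^2"
    proof -
      have "\<bar>r - s\<bar> \<le> \<bar>t\<bar>" using s1 tr tpos by (simp add: abs_le_iff)
      thus ?thesis by (simp add: abs_le_square_iff)
    qed
    have z0: "z \<ge> 0" unfolding z_def using rs spos assms(4) by simp
    have "z \<le> t^2 / (4 * r * s)" unfolding z_def
      by (rule divide_right_mono) (use spos assms(4) in auto)
    also have "\<dots> \<le> t^2 / (4 * r * (t / 2))" by (rule t100) (use spos assms(4) sl tpos in auto)
    also have "\<dots> = t / (2 * r)" using tpos by (simp add: power2_eq_square)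
    also have "\<dots> \<le> cH * t" unfolding cH_def using tpos by (simp add: algebra_simps)
    finally have zb: "\<bar>z\<bar> \<le> cH * t" using z0 by simp
    have ct1: "1 \<le> cH * t" 
    proof -
      have "1 * 1 \<le> cH * t" by (rule mult_mono) (use cH1 t2 in auto)
      thus ?thesis by simp
    qed
    have Hb: "\<bar>H z\<bar> \<le> AH * (cH * t)^(l-1)"
      unfolding H_def AH_def using hyp_bound[OF zb ct1] by simp
    have "\<bar>g t s\<bar> = \<bar>C0\<bar> * s powr e * exp (- s / 2) * \<bar>laguerre k (2 * \<mu>) s\<bar> * \<bar>H z\<bar>"
      unfolding g_def z_def[symmetric] F0s by (simp add: abs_mult)
    also have "\<dots> \<le> \<bar>C0\<bar> * (2 powr \<bar>e\<bar> * t powr e) * (exp (r / 2) * exp (- t / 2)) * (AL * (2 * t)^k) * (AH * (cH * t)^(l-1))"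
      by (rule prod5) (use P E L Hb AL0 AH0 spos tpos in auto)
    also have "\<dots> = K * (t powr e * t^k * t^(l-1)) * exp (- t / 2)"
      unfolding K_def by (simp add: power_mult_distrib)
    also have "t powr e * t^k * t^(l-1) = t powr (real n + \<mu> - 5/2)"
      unfolding expo[symmetric] using tpos by (rule t114)
    finally show ?thesis .
  qed
  define C where "C = real (l*(l+1)) * K / (2 * r) + 1"
  have C0': "real (l*(l+1)) * K / (2 * r) \<ge> 0" using K0 assms(4) by simp
  show ?thesis
  proof (intro exI conjI allI impI)
    show "C > 0" using C0' unfolding C_def by linarith
    show "T > 0" unfolding T_def by simp
    fix t assume tT: "t \<ge> T"
    have tpos: "t > 0" and tr: "t > r" using tT assms(4) by (auto simp: T_def)
    define M where "M = K * t powr (real n + \<mu> - 5/2) * exp (- t / 2)"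
    have "\<bar>LINT s:{t-r<..r+t}|lborel. g t s\<bar> \<le> M * ((r + t) - (t - r))"
      by (rule set_int_bound) (use pb[OF tT] M_def assms(4) in auto)
    with red[OF tr] have I: "\<bar>LINT s:{r-t..r+t}|lborel. g t s\<bar> \<le> M * (2 * r)" by simp
    have "\<bar>Fsol l n \<mu> C0 r t - Ffree l n \<mu> C0 r t\<bar>
        = real (l*(l+1)) * t / (4 * r^2) * \<bar>LINT s:{r-t..r+t}|lborel. g t s\<bar>"
      unfolding diff using tpos assms(4) by (simp add: abs_mult)
    also have "\<dots> \<le> real (l*(l+1)) * t / (4 * r^2) * (M * (2 * r))"
      by (rule mult_left_mono[OF I]) (use tpos assms(4) in simp)
    also have "\<dots> = (real (l*(l+1)) * K / (2 * r)) * exp (- t / 2) * (t * t powr (real n + \<mu> - 5/2))"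
      unfolding M_def using assms(4) by (simp add: field_simps power2_eq_square)
    also have "t * t powr (real n + \<mu> - 5/2) = t powr (real n + \<mu> - 3/2)"
    proof -
      have ee: "real n + \<mu> - 3/2 = (real n + \<mu> - 5/2) + 1" by simp
      show ?thesis unfolding ee powr_add using tpos by simp
    qed
    also have "(real (l*(l+1)) * K / (2 * r)) * exp (- t / 2) * t powr (real n + \<mu> - 3/2)
        \<le> C * exp (- t / 2) * t powr (real n + \<mu> - 3/2)"
      unfolding C_def by (intro mult_right_mono) auto
    finally show "\<bar>Fsol l n \<mu> C0 r t - Ffree l n \<mu> C0 r t\<bar> \<le> C * exp (- t / 2) * t powr (real n + \<mu> - 3/2)" .
  qed
qed

end
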